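(* Let $\Phi,\Psi,S,T$ be finite sets and let $(s,t,\varphi,\psi)$ be random variables with values in $S\times T\times\Phi\times\Psi$ such that $\varphi$ and $\psi$ are independent and the signals are entangled. Then for any $\varphi_1,\varphi_2\in\Phi$ with positive probability and any $t\in T$, $p(t\mid\varphi_1)=p(t\mid\varphi_2)$; indeed $p(t\mid\varphi)=p(t)$.
   Context: A joint distribution of $(s,t,\varphi,\psi)$ is disjoint if $\Pr\{\psi\mid\varphi,s\}=\Pr\{\psi\mid\varphi\}$ and $\Pr\{\varphi\mid\psi,t\}=\Pr\{\varphi\mid\psi\}$ (whenever the conditioning events have positive probability); classically generated if there exists a random variable $x$ independent of $(\varphi,\psi)$ such that $p(s,t\mid x,\varphi,\psi)=p(s\mid x,\varphi)\,p(t\mid x,\psi)$; entangled if it is disjoint and not classically generated. Here $\varphi,\psi$ are the players' states of nature and $s,t$ their signals. *)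

theory Defs
  imports "HOL-Probability.Probability_Mass_Function"
begin

text \<open>Probability of an event given by a predicate, and conditional probability
  (ratio; only used when the conditioning event has positive probability).\<close>
definition Pr :: "'w pmf \<Rightarrow> ('w \<Rightarrow> bool) \<Rightarrow> real" where
  "Pr D E = measure_pmf.prob D {w. E w}"

definition cPr :: "'w pmf \<Rightarrow> ('w \<Rightarrow> bool) \<Rightarrow> ('w \<Rightarrow> bool) \<Rightarrow> real" where
  "cPr D E C = Pr D (\<lambda>w. E w \<and> C w) / Pr D C"

definition sig_s :: "'s \<times> 't \<times> 'f \<times> 'g \<Rightarrow> 's" where "sig_s w = fst w"
definition sig_t :: "'s \<times> 't \<times> 'f \<times> 'g \<Rightarrow> 't" where "sig_t w = fst (snd w)"
definition st_phi :: "'s \<times> 't \<times> 'f \<times> 'g \<Rightarrow> 'f" where "st_phi w = fst (snd (snd w))"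
definition st_psi :: "'s \<times> 't \<times> 'f \<times> 'g \<Rightarrow> 'g" where "st_psi w = snd (snd (snd w))"

definition disjoint_dist :: "('s \<times> 't \<times> 'f \<times> 'g) pmf \<Rightarrow> bool" where
  "disjoint_dist D \<longleftrightarrow>
     (\<forall>s a b. Pr D (\<lambda>w. st_phi w = a \<and> sig_s w = s) > 0 \<longrightarrow>
        cPr D (\<lambda>w. st_psi w = b) (\<lambda>w. st_phi w = a \<and> sig_s w = s)
        = cPr D (\<lambda>w. st_psi w = b) (\<lambda>w. st_phi w = a)) \<and>
     (\<forall>t a b. Pr D (\<lambda>w. st_psi w = b \<and> sig_t w = t) > 0 \<longrightarrow>
        cPr D (\<lambda>w. st_phi w = a) (\<lambda>w. st_psi w = b \<and> sig_t w = t)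
        = cPr D (\<lambda>w. st_phi w = a) (\<lambda>w. st_psi w = b))"

text \<open>Classically generated: there is a random variable x (here nat-valued, jointly
  distributed with (s,t,phi,psi) via a pmf Q whose marginal is D) independent of
  (phi,psi) with p(s,t | x,phi,psi) = p(s | x,phi) p(t | x,psi).\<close>
definition classically_generated :: "('s \<times> 't \<times> 'f \<times> 'g) pmf \<Rightarrow> bool" where
  "classically_generated D \<longleftrightarrow>
     (\<exists>Q :: (nat \<times> ('s \<times> 't \<times> 'f \<times> 'g)) pmf.
        map_pmf snd Q = D \<and>
        (\<forall>x a b. Pr Q (\<lambda>(y, w). y = x \<and> st_phi w = a \<and> st_psi w = b)
                 = Pr Q (\<lambda>(y, w). y = x) * Pr Q (\<lambda>(y, w). st_phi w = a \<and> st_psi w = b)) \<and>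
        (\<forall>x a b s t. Pr Q (\<lambda>(y, w). y = x \<and> st_phi w = a \<and> st_psi w = b) > 0 \<longrightarrow>
           cPr Q (\<lambda>(y, w). sig_s w = s \<and> sig_t w = t)
                 (\<lambda>(y, w). y = x \<and> st_phi w = a \<and> st_psi w = b)
           = cPr Q (\<lambda>(y, w). sig_s w = s) (\<lambda>(y, w). y = x \<and> st_phi w = a)
             * cPr Q (\<lambda>(y, w). sig_t w = t) (\<lambda>(y, w). y = x \<and> st_psi w = b)))"

definition entangled :: "('s \<times> 't \<times> 'f \<times> 'g) pmf \<Rightarrow> bool" where
  "entangled D \<longleftrightarrow> disjoint_dist D \<and> \<not> classically_generated D"

end

theory Submission
  imports Defs
begin

lemma Pr_sum:
  fixes D :: "'w::finite pmf"
  shows "Pr D E = (\<Sum>w\<in>UNIV. if E w then pmf D w else 0)"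
  unfolding Pr_def
  by (simp add: measure_measure_pmf_finite sum.inter_filter[symmetric])

lemma Pr_mono:
  fixes D :: "'w::finite pmf"
  assumes "\<And>w. E w \<Longrightarrow> F w"
  shows "Pr D E \<le> Pr D F"
  unfolding Pr_sum by (rule sum_mono) (use assms in auto)

lemma Pr_nonneg: "Pr D E \<ge> 0"
  unfolding Pr_def by simp

lemma Pr_marg:
  fixes D :: "('s::finite \<times> 't::finite \<times> 'f::finite \<times> 'g::finite) pmf"
  shows "(\<Sum>b\<in>UNIV. Pr D (\<lambda>w. P w \<and> st_psi w = b)) = Pr D P"
proof -
  have "(\<Sum>b\<in>UNIV. Pr D (\<lambda>w. P w \<and> st_psi w = b))
      = (\<Sum>w\<in>UNIV. \<Sum>b\<in>UNIV. if P w \<and> st_psi w = b then pmf D w else 0)"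
    unfolding Pr_sum by (rule sum.swap)
  also have "\<dots> = (\<Sum>w\<in>UNIV. if P w then pmf D w else 0)"
    by (rule sum.cong) (auto simp: if_distrib)
  finally show ?thesis unfolding Pr_sum .
qed

theorem lemma3:
  fixes D :: "('s::finite \<times> 't::finite \<times> 'f::finite \<times> 'g::finite) pmf"
  assumes indep: "\<forall>a b. Pr D (\<lambda>w. st_phi w = a \<and> st_psi w = b)
                        = Pr D (\<lambda>w. st_phi w = a) * Pr D (\<lambda>w. st_psi w = b)"
    and ent: "entangled D"
  shows "(\<forall>a1 a2 t. Pr D (\<lambda>w. st_phi w = a1) > 0 \<longrightarrow> Pr D (\<lambda>w. st_phi w = a2) > 0 \<longrightarrow>
            cPr D (\<lambda>w. sig_t w = t) (\<lambda>w. st_phi w = a1)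
            = cPr D (\<lambda>w. sig_t w = t) (\<lambda>w. st_phi w = a2)) \<and>
         (\<forall>a t. Pr D (\<lambda>w. st_phi w = a) > 0 \<longrightarrow>
            cPr D (\<lambda>w. sig_t w = t) (\<lambda>w. st_phi w = a) = Pr D (\<lambda>w. sig_t w = t))"
proof -
  have dis: "\<And>t a b. Pr D (\<lambda>w. st_psi w = b \<and> sig_t w = t) > 0 \<Longrightarrow>
        cPr D (\<lambda>w. st_phi w = a) (\<lambda>w. st_psi w = b \<and> sig_t w = t)
        = cPr D (\<lambda>w. st_phi w = a) (\<lambda>w. st_psi w = b)"
    using ent unfolding entangled_def disjoint_dist_def by blast
  have key: "Pr D (\<lambda>w. (sig_t w = t \<and> st_phi w = a) \<and> st_psi w = b)
           = Pr D (\<lambda>w. st_phi w = a) * Pr D (\<lambda>w. sig_t w = t \<and> st_psi w = b)" for a b t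
  proof -
    have e1: "Pr D (\<lambda>w. (sig_t w = t \<and> st_phi w = a) \<and> st_psi w = b)
            = Pr D (\<lambda>w. st_phi w = a \<and> st_psi w = b \<and> sig_t w = t)"
      by (rule arg_cong[where f="Pr D"]) auto
    have e2: "Pr D (\<lambda>w. sig_t w = t \<and> st_psi w = b) = Pr D (\<lambda>w. st_psi w = b \<and> sig_t w = t)"
      by (rule arg_cong[where f="Pr D"]) auto
    show ?thesis
    proof (cases "Pr D (\<lambda>w. st_psi w = b \<and> sig_t w = t) > 0")
      case True
      have pb: "Pr D (\<lambda>w. st_psi w = b) > 0"
        using True Pr_mono[of "\<lambda>w. st_psi w = b \<and> sig_t w = t" "\<lambda>w. st_psi w = b" D] by linarith
      have "cPr D (\<lambda>w. st_phi w = a) (\<lambda>w. st_psi w = b) = Pr D (\<lambda>w. st_phi w = a)"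
        using pb indep unfolding cPr_def by simp
      with dis[OF True, of a] have
        "Pr D (\<lambda>w. st_phi w = a \<and> st_psi w = b \<and> sig_t w = t) / Pr D (\<lambda>w. st_psi w = b \<and> sig_t w = t)
          = Pr D (\<lambda>w. st_phi w = a)" unfolding cPr_def by simp
      then show ?thesis using True e1 e2 by (simp add: field_simps)
    next
      case False
      then have z: "Pr D (\<lambda>w. st_psi w = b \<and> sig_t w = t) = 0" using Pr_nonneg[of D] 
        by (metis less_eq_real_def)
      have "Pr D (\<lambda>w. st_phi w = a \<and> st_psi w = b \<and> sig_t w = t) \<le> 0"
        using Pr_mono[of "\<lambda>w. st_phi w = a \<and> st_psi w = b \<and> sig_t w = t" "\<lambda>w. st_psi w = b \<and> sig_t w = t" D] z
        by simp
      then have "Pr D (\<lambda>w. st_phi w = a \<and> st_psi w = b \<and> sig_t w = t) = 0"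
        using Pr_nonneg[of D] by (meson order_antisym)
      then show ?thesis using e1 e2 z by simp
    qed
  qed
  have second: "\<forall>a t. Pr D (\<lambda>w. st_phi w = a) > 0 \<longrightarrow>
            cPr D (\<lambda>w. sig_t w = t) (\<lambda>w. st_phi w = a) = Pr D (\<lambda>w. sig_t w = t)"
  proof (intro allI impI)
    fix a t assume pa: "Pr D (\<lambda>w. st_phi w = a) > 0"
    have "Pr D (\<lambda>w. sig_t w = t \<and> st_phi w = a)
        = (\<Sum>b\<in>UNIV. Pr D (\<lambda>w. (sig_t w = t \<and> st_phi w = a) \<and> st_psi w = b))"
      by (rule Pr_marg[symmetric])
    also have "\<dots> = Pr D (\<lambda>w. st_phi w = a) * (\<Sum>b\<in>UNIV. Pr D (\<lambda>w. sig_t w = t \<and> st_psi w = b))"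
      unfolding key by (simp add: sum_distrib_left)
    also have "\<dots> = Pr D (\<lambda>w. st_phi w = a) * Pr D (\<lambda>w. sig_t w = t)"
      by (simp add: Pr_marg)
    finally show "cPr D (\<lambda>w. sig_t w = t) (\<lambda>w. st_phi w = a) = Pr D (\<lambda>w. sig_t w = t)"
      using pa unfolding cPr_def by simp
  qed
  then show ?thesis by simp
qed

end
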